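(* Let $\mathbb{G}=(\mathcal{V},\mathcal{E})$ be a connected undirected graph on $\mathcal{V}=\{1,\dots,m\}$ with $\bar m$ edges. For each edge $(i,j)$, in either order, let $A_{ij}\in\mathbb{R}^{d_{ij}\times n}$ have full row rank and $\boldsymbol{b}_{ij}\in\mathbb{R}^{d_{ij}}$, with $A_{ij}=A_{ji}$, $\boldsymbol{b}_{ij}=-\boldsymbol{b}_{ji}$. Let $\boldsymbol{f}_i:\mathbb{R}^n\to\mathbb{R}$ be continuously differentiable and convex, $\boldsymbol{f}(\boldsymbol{x})=\sum_i\boldsymbol{f}_i(\boldsymbol{x}_i)$, and assume the problem $\min\sum_i\boldsymbol{f}_i(\boldsymbol{x}_i)$ subject to $A_{ij}(\boldsymbol{x}_i-\boldsymbol{x}_j)=\boldsymbol{b}_{ij}$ for all $(i,j)\in\mathcal{E}$ has a solution, and that $\ker\bar H'\cap\operatorname{image}\bar P=\{\boldsymbol{0}\}$. Define the augmented Lagrangian $\boldsymbol{F}:\mathbb{R}^{mn}\times\mathbb{R}^{mn}\to\mathbb{R}$, $$\boldsymbol{F}(\boldsymbol{x},\boldsymbol{\lambda})=\boldsymbol{f}(\boldsymbol{x})+\boldsymbol{\lambda}'\bar H'\bar P(\bar H\boldsymbol{x}-\bar{\boldsymbol{b}})+\tfrac12\|\bar P(\bar H\boldsymbol{x}-\bar{\boldsymbol{b}})\|^2,$$ and the dynamics $$\dot{\boldsymbol{x}}=-\nabla\boldsymbol{f}(\boldsymbol{x})-\bar H'\bar P\bar H\boldsymbol{\lambda}-\bar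 H'\bar P(\bar H\boldsymbol{x}-\bar{\boldsymbol{b}}),\qquad \dot{\boldsymbol{\lambda}}=\bar H'\bar P(\bar H\boldsymbol{x}-\bar{\boldsymbol{b}}).$$ Then every equilibrium $(\bar{\boldsymbol{x}},\bar{\boldsymbol{\lambda}})$ of these dynamics is a global min-max saddle point of $\boldsymbol{F}$, i.e. $\boldsymbol{F}(\bar{\boldsymbol{x}},\boldsymbol{\lambda})\le\boldsymbol{F}(\bar{\boldsymbol{x}},\bar{\boldsymbol{\lambda}})\le\boldsymbol{F}(\boldsymbol{x},\bar{\boldsymbol{\lambda}})$ for all $\boldsymbol{x},\boldsymbol{\lambda}\in\mathbb{R}^{mn}$.
   Context: $\boldsymbol{x}=\mathrm{col}\{\boldsymbol{x}_1,\dots,\boldsymbol{x}_m\}$, $'$ denotes transpose, $\|\cdot\|$ the Euclidean norm. $P_{ij}=A_{ij}'(A_{ij}A_{ij}')^{-1}A_{ij}$, $\bar{\boldsymbol{b}}_{ij}=A_{ij}'(A_{ij}A_{ij}')^{-1}\boldsymbol{b}_{ij}$. With a fixed enumeration/orientation of edges $(i_1,j_1),\dots,(i_{\bar m},j_{\bar m})$: $\bar P=\mathrm{diag}\{P_{i_1j_1},\dots,P_{i_{\bar m}j_{\bar m}}\}$ (block diagonal), $\bar{\boldsymbol{b}}=\mathrm{col}\{\bar{\boldsymbol{b}}_{i_lj_l}\}_{l=1}^{\bar m}$, $H\in\mathbb{R}^{\bar m\times m}$ the oriented incidence matrix whose $l$-th row has $1$ in column $i_l$, $-1$ in column $j_l$,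 $0$ elsewhere, $\bar H=H\otimes I_n$. *)

theory Defs
  imports "HOL-Analysis.Analysis"
begin

text \<open>Vertices are 0,...,m-1; vectors of R^n are real^'n.
  A matrix A in R^(d x n) is represented by the list of its d rows (each in R^n);
  vectors of R^d are real lists of length d.\<close>

definition mat_app :: "(real^'n) list \<Rightarrow> real^'n \<Rightarrow> real list" where
  "mat_app rs v = map (\<lambda>r. r \<bullet> v) rs"

definition mat_tr_app :: "(real^'n) list \<Rightarrow> real list \<Rightarrow> real^'n" where
  "mat_tr_app rs y = (\<Sum>k<length rs. (y ! k) *\<^sub>R (rs ! k))"

definition full_row_rank :: "(real^'n) list \<Rightarrow> bool" where
  "full_row_rank rs \<longleftrightarrow> dim (span (set rs)) = length rs"

definition gram :: "(real^'n) list \<Rightarrow> nat \<Rightarrow> nat \<Rightarrow> real" where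
  "gram rs k l = (rs ! k) \<bullet> (rs ! l)"

definition sq_inv :: "nat \<Rightarrow> (nat \<Rightarrow> nat \<Rightarrow> real) \<Rightarrow> (nat \<Rightarrow> nat \<Rightarrow> real)" where
  "sq_inv d M = (SOME N. (\<forall>i<d. \<forall>j<d. (\<Sum>k<d. M i k * N k j) = (if i = j then 1 else 0))
                        \<and> (\<forall>i<d. \<forall>j<d. (\<Sum>k<d. N i k * M k j) = (if i = j then 1 else 0)))"

definition sq_app :: "nat \<Rightarrow> (nat \<Rightarrow> nat \<Rightarrow> real) \<Rightarrow> real list \<Rightarrow> real list" where
  "sq_app d N y = map (\<lambda>k. \<Sum>l<d. N k l * (y ! l)) [0..<d]"

text \<open>P = A'(AA')^{-1}A, applied to a vector\<close>
definition projP :: "(real^'n) list \<Rightarrow> real^'n \<Rightarrow> real^'n" where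
  "projP rs v = mat_tr_app rs (sq_app (length rs) (sq_inv (length rs) (gram rs)) (mat_app rs v))"

text \<open>bbar = A'(AA')^{-1}b\<close>
definition bvec :: "(real^'n) list \<Rightarrow> real list \<Rightarrow> real^'n" where
  "bvec rs b = mat_tr_app rs (sq_app (length rs) (sq_inv (length rs) (gram rs)) b)"

text \<open>Oriented incidence matrix H (mbar x m), row l = edge ed l\<close>
definition incid :: "(nat \<Rightarrow> nat \<times> nat) \<Rightarrow> nat \<Rightarrow> nat \<Rightarrow> real" where
  "incid ed l c = (if c = fst (ed l) then 1 else if c = snd (ed l) then -1 else 0)"

text \<open>Block vectors: x in R^(mn) as nat => real^'n (blocks 0..m-1);
  edge-indexed vectors in R^(mbar n) as nat => real^'n (blocks 0..mbar-1).\<close>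

text \<open>Hbar x = (H \<otimes> I_n) x\<close>
definition Hbar :: "(nat \<Rightarrow> nat \<times> nat) \<Rightarrow> (nat \<Rightarrow> real^'n) \<Rightarrow> (nat \<Rightarrow> real^'n)" where
  "Hbar ed x = (\<lambda>l. (\<Sum>c\<in>{fst (ed l), snd (ed l)}. incid ed l c *\<^sub>R x c))"

text \<open>Hbar' y = (H' \<otimes> I_n) y\<close>
definition HbarT :: "(nat \<Rightarrow> nat \<times> nat) \<Rightarrow> nat \<Rightarrow> (nat \<Rightarrow> real^'n) \<Rightarrow> (nat \<Rightarrow> real^'n)" where
  "HbarT ed mbar y = (\<lambda>i. \<Sum>l<mbar. incid ed l i *\<^sub>R y l)"

text \<open>Pbar = blockdiag(P_{i_l j_l})\<close>
definition Pbar :: "(nat \<Rightarrow> nat \<Rightarrow> (real^'n) list) \<Rightarrow> (nat \<Rightarrow> nat \<times> nat) \<Rightarrow>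
    (nat \<Rightarrow> real^'n) \<Rightarrow> (nat \<Rightarrow> real^'n)" where
  "Pbar A ed y = (\<lambda>l. projP (A (fst (ed l)) (snd (ed l))) (y l))"

definition bbar :: "(nat \<Rightarrow> nat \<Rightarrow> (real^'n) list) \<Rightarrow> (nat \<Rightarrow> nat \<Rightarrow> real list) \<Rightarrow>
    (nat \<Rightarrow> nat \<times> nat) \<Rightarrow> (nat \<Rightarrow> real^'n)" where
  "bbar A b ed = (\<lambda>l. bvec (A (fst (ed l)) (snd (ed l))) (b (fst (ed l)) (snd (ed l))))"

definition resid :: "(nat \<Rightarrow> nat \<Rightarrow> (real^'n) list) \<Rightarrow> (nat \<Rightarrow> nat \<Rightarrow> real list) \<Rightarrow>
    (nat \<Rightarrow> nat \<times> nat) \<Rightarrow> (nat \<Rightarrow> real^'n) \<Rightarrow> (nat \<Rightarrow> real^'n)" where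
  "resid A b ed x = Pbar A ed (\<lambda>l. Hbar ed x l - bbar A b ed l)"

definition augLag :: "nat \<Rightarrow> nat \<Rightarrow> (nat \<Rightarrow> nat \<times> nat) \<Rightarrow> (nat \<Rightarrow> nat \<Rightarrow> (real^'n) list) \<Rightarrow>
    (nat \<Rightarrow> nat \<Rightarrow> real list) \<Rightarrow> (nat \<Rightarrow> real^'n \<Rightarrow> real) \<Rightarrow>
    (nat \<Rightarrow> real^'n) \<Rightarrow> (nat \<Rightarrow> real^'n) \<Rightarrow> real" where
  "augLag m mbar ed A b f x lam =
     (\<Sum>i<m. f i (x i))
     + (\<Sum>i<m. lam i \<bullet> HbarT ed mbar (resid A b ed x) i)
     + 1/2 * (\<Sum>l<mbar. (norm (resid A b ed x l))\<^sup>2)"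

text \<open>Equilibrium of the primal-dual dynamics (g i = gradient of f i)\<close>
definition equilibrium :: "nat \<Rightarrow> nat \<Rightarrow> (nat \<Rightarrow> nat \<times> nat) \<Rightarrow> (nat \<Rightarrow> nat \<Rightarrow> (real^'n) list) \<Rightarrow>
    (nat \<Rightarrow> nat \<Rightarrow> real list) \<Rightarrow> (nat \<Rightarrow> real^'n \<Rightarrow> real^'n) \<Rightarrow>
    (nat \<Rightarrow> real^'n) \<Rightarrow> (nat \<Rightarrow> real^'n) \<Rightarrow> bool" where
  "equilibrium m mbar ed A b g x lam \<longleftrightarrow>
     (\<forall>i<m. - g i (x i) - HbarT ed mbar (Pbar A ed (Hbar ed lam)) i
              - HbarT ed mbar (resid A b ed x) i = 0)
     \<and> (\<forall>i<m. HbarT ed mbar (resid A b ed x) i = 0)"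

end

theory Submission
  imports Defs "Jordan_Normal_Form.Determinant"
begin

lemma tangent:
  fixes f :: "real^'n \<Rightarrow> real"
  assumes cv: "convex_on UNIV f" and d: "(f has_derivative (\<lambda>h. g \<bullet> h)) (at z)"
  shows "f y \<ge> f z + g \<bullet> (y - z)"
proof -
  define \<phi> where "\<phi> t = f (z + t *\<^sub>R (y - z))" for t
  have "convex_on UNIV \<phi>"
    unfolding \<phi>_def
  proof (rule convex_onI)
    fix a t u :: real assume a: "0 < a" "a < 1"
    have "z + ((1 - a) *\<^sub>R t + a *\<^sub>R u) *\<^sub>R (y - z) = (1 - a) *\<^sub>R (z + t *\<^sub>R (y - z)) + a *\<^sub>R (z + u *\<^sub>R (y - z))"
      by (simp add: algebra_simps)
    then show "f (z + ((1 - a) *\<^sub>R t + a *\<^sub>R u) *\<^sub>R (y - z)) \<le> (1 - a) * f (z + t *\<^sub>R (y - z)) + a * f (z + u *\<^sub>R (y - z))"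
      using convex_onD[OF cv, of a "z + t *\<^sub>R (y - z)" "z + u *\<^sub>R (y - z)"] a by simp
  qed simp
  moreover have "(\<phi> has_field_derivative (g \<bullet> (y - z))) (at 0 within UNIV)"
  proof -
    have l: "((\<lambda>t::real. z + t *\<^sub>R (y - z)) has_derivative (\<lambda>t. t *\<^sub>R (y - z))) (at 0)"
      by (auto intro!: derivative_eq_intros)
    have "(\<phi> has_derivative (\<lambda>t. g \<bullet> (t *\<^sub>R (y - z)))) (at 0)"
      unfolding \<phi>_def using has_derivative_compose[OF l, of f "\<lambda>h. g \<bullet> h"] d by simp
    moreover have "(\<lambda>t. g \<bullet> (t *\<^sub>R (y - z))) = (*) (g \<bullet> (y - z))"
      by (auto simp: mult.commute)
    ultimately show ?thesis unfolding has_field_derivative_def by simp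
  qed
  ultimately have "\<phi> 1 - \<phi> 0 \<ge> (g \<bullet> (y - z)) * (1 - 0)"
    by (intro convex_on_imp_above_tangent) auto
  then show ?thesis unfolding \<phi>_def by simp
qed

lemma frr_indep:
  assumes "full_row_rank rs"
  shows "distinct rs \<and> independent (set rs)"
proof -
  have d: "dim (span (set rs)) = length rs" using assms unfolding full_row_rank_def by simp
  have "dim (span (set rs)) \<le> card (set rs)"
    by (simp add: dim_le_card')
  moreover have "card (set rs) \<le> length rs" by (rule card_length)
  ultimately have c: "card (set rs) = length rs" using d by simp
  then have "distinct rs" by (simp add: card_distinct)
  moreover have "independent (set rs)"
    using card_eq_dim[of "set rs" "span (set rs)"] c d by (simp add: span_superset)
  ultimately show ?thesis by simp
qed

lemma frr_inj:
  assumes "full_row_rank rs" and "(\<Sum>l<length rs. c l *\<^sub>R rs ! l) = 0" and "k < length rs"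
  shows "c k = 0"
proof -
  from frr_indep[OF assms(1)] have di: "distinct rs" and ind: "independent (set rs)" by auto
  have bij: "bij_betw (nth rs) {..<length rs} (set rs)"
    using di unfolding bij_betw_def by (auto simp: distinct_conv_nth inj_on_def set_conv_nth lessThan_def)
  define u where "u v = c (the_inv_into {..<length rs} (nth rs) v)" for v
  have "(\<Sum>v\<in>set rs. u v *\<^sub>R v) = (\<Sum>l<length rs. u (rs ! l) *\<^sub>R rs ! l)"
    using sum.reindex_bij_betw[OF bij, of "\<lambda>v. u v *\<^sub>R v"] by simp
  also have "\<dots> = (\<Sum>l<length rs. c l *\<^sub>R rs ! l)"
    by (rule sum.cong) (use bij in \<open>auto simp: u_def the_inv_into_f_f bij_betw_def\<close>)
  finally have "(\<Sum>v\<in>set rs. u v *\<^sub>R v) = 0" using assms(2) by simp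
  then have "u (rs ! k) = 0" using ind independent_explicit[of "set rs"] assms(3) by auto
  then show ?thesis using bij assms(3) by (auto simp: u_def the_inv_into_f_f bij_betw_def)
qed

lemma gram_inv_exists:
  assumes frr: "full_row_rank rs"
  shows "\<exists>N. (\<forall>i<length rs. \<forall>j<length rs. (\<Sum>k<length rs. gram rs i k * N k j) = (if i = j then 1 else 0))
            \<and> (\<forall>i<length rs. \<forall>j<length rs. (\<Sum>k<length rs. N i k * gram rs k j) = (if i = j then 1 else 0))"
proof -
  define d where "d = length rs"
  define G where "G = mat d d (\<lambda>(i,j). gram rs i j)"
  have Gc: "G \<in> carrier_mat d d" by (simp add: G_def)
  have "det G \<noteq> 0"
  proof
    assume "det G = 0"
    then obtain v where v: "v \<in> carrier_vec d" "v \<noteq> 0\<^sub>v d" "G *\<^sub>v v = 0\<^sub>v d"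
      using det_0_iff_vec_prod_zero_field[OF Gc] by auto
    define w where "w = (\<Sum>l<d. vec_index v l *\<^sub>R rs ! l)"
    have rk: "rs ! k \<bullet> w = 0" if k: "k < d" for k
    proof -
      have "vec_index (G *\<^sub>v v) k = (\<Sum>l<d. gram rs k l * vec_index v l)"
        using k v(1) by (simp add: G_def scalar_prod_def atLeast0LessThan)
      also have "\<dots> = rs ! k \<bullet> w"
        by (simp add: w_def inner_sum_right gram_def mult.commute)
      finally show ?thesis using v(3) k by simp
    qed
    have "w \<bullet> w = (\<Sum>l<d. vec_index v l * (rs ! l \<bullet> w))"
      by (simp add: w_def inner_sum_left)
    also have "\<dots> = 0" using rk by simp
    finally have w0: "w = 0" by simp
    have "vec_index v l = 0" if "l < d" for l
      using frr_inj[OF frr, of "vec_index v" l] w0 that unfolding w_def d_def by simp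
    then have "v = 0\<^sub>v d" using v(1) by (intro eq_vecI) auto
    with v(2) show False by simp
  qed
  from det_non_zero_imp_unit[OF Gc this, of "()"]
  obtain B where B: "B \<in> carrier_mat d d" "B * G = 1\<^sub>m d" "G * B = 1\<^sub>m d"
    unfolding Units_def ring_mat_def by auto
  have 1: "(\<Sum>k<d. gram rs i k * B $$ (k, j)) = (if i = j then 1 else 0)" if "i < d" "j < d" for i j
  proof -
    have "index_mat (G * B) (i, j) = (if i = j then 1 else 0)" using B(3) that by simp
    moreover have "index_mat (G * B) (i, j) = (\<Sum>k<d. gram rs i k * B $$ (k, j))"
      using that B(1) by (simp add: G_def scalar_prod_def atLeast0LessThan)
    ultimately show ?thesis by simp
  qed
  have 2: "(\<Sum>k<d. B $$ (i, k) * gram rs k j) = (if i = j then 1 else 0)" if "i < d" "j < d" for i j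
  proof -
    have "index_mat (B * G) (i, j) = (if i = j then 1 else 0)" using B(2) that by simp
    moreover have "index_mat (B * G) (i, j) = (\<Sum>k<d. B $$ (i, k) * gram rs k j)"
      using that B(1) by (simp add: G_def scalar_prod_def atLeast0LessThan)
    ultimately show ?thesis by simp
  qed
  show ?thesis using 1 2 unfolding d_def by (intro exI[of _ "\<lambda>i j. B $$ (i, j)"]) auto
qed

lemma sq_inv_props:
  assumes frr: "full_row_rank rs"
  shows "\<forall>i<length rs. \<forall>j<length rs. (\<Sum>k<length rs. gram rs i k * sq_inv (length rs) (gram rs) k j) = (if i = j then 1 else 0)"
    and "\<forall>i<length rs. \<forall>j<length rs. (\<Sum>k<length rs. sq_inv (length rs) (gram rs) i k * gram rs k j) = (if i = j then 1 else 0)"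
  using someI_ex[OF gram_inv_exists[OF frr]] unfolding sq_inv_def by auto

lemma sq_inv_sym:
  assumes frr: "full_row_rank rs" and ij: "i < length rs" "j < length rs"
  shows "sq_inv (length rs) (gram rs) i j = sq_inv (length rs) (gram rs) j i"
proof -
  define d where "d = length rs"
  define N where "N = sq_inv d (gram rs)"
  have p1: "\<And>a c. a < d \<Longrightarrow> c < d \<Longrightarrow> (\<Sum>k<d. gram rs a k * N k c) = (if a = c then 1 else 0)"
    using sq_inv_props(1)[OF frr] by (simp add: N_def d_def)
  have gs: "gram rs k l = gram rs l k" for k l by (simp add: gram_def inner_commute)
  define S where "S = (\<Sum>k<d. \<Sum>l<d. N k i * gram rs k l * N l j)"
  have "S = (\<Sum>k<d. N k i * (\<Sum>l<d. gram rs k l * N l j))"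
    by (simp add: S_def sum_distrib_left mult.assoc)
  also have "\<dots> = (\<Sum>k<d. N k i * (if k = j then 1 else 0))"
    using p1 ij by (intro sum.cong) (auto simp: d_def)
  also have "\<dots> = N j i" using ij by (simp add: d_def if_distrib cong: if_cong)
  finally have a: "S = N j i" .
  have "S = (\<Sum>l<d. (\<Sum>k<d. gram rs l k * N k i) * N l j)"
  proof -
    have "S = (\<Sum>l<d. \<Sum>k<d. N k i * gram rs k l * N l j)"
      unfolding S_def by (rule sum.swap)
    also have "\<dots> = (\<Sum>l<d. (\<Sum>k<d. gram rs l k * N k i) * N l j)"
      by (intro sum.cong refl) (simp add: sum_distrib_right sum_distrib_left gs mult_ac)
    finally show ?thesis .
  qed
  also have "\<dots> = (\<Sum>l<d. (if l = i then 1 else 0) * N l j)"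
    using p1 ij by (intro sum.cong) (auto simp: d_def)
  also have "\<dots> = N i j" using ij by (subst sum.cong[OF refl, of _ _ "\<lambda>l. if l = i then N l j else 0"]) (auto simp: d_def)
  finally have b: "S = N i j" .
  show ?thesis using a b by (simp add: N_def d_def)
qed

lemma projP_eq:
  "projP rs u = (\<Sum>k<length rs. (\<Sum>l<length rs. sq_inv (length rs) (gram rs) k l * (rs ! l \<bullet> u)) *\<^sub>R rs ! k)"
  unfolding projP_def mat_tr_app_def sq_app_def mat_app_def
  by (intro sum.cong) auto

lemma projP_diff: "projP rs (u - v) = projP rs u - projP rs v"
  unfolding projP_eq
  by (simp add: inner_diff_right right_diff_distrib sum_subtractf scaleR_diff_left)

lemma projP_sym:
  assumes frr: "full_row_rank rs"
  shows "projP rs u \<bullet> v = u \<bullet> projP rs v"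
proof -
  define d where "d = length rs"
  define N where "N = sq_inv d (gram rs)"
  have sym: "\<And>a c. a < d \<Longrightarrow> c < d \<Longrightarrow> N a c = N c a"
    using sq_inv_sym[OF frr] by (simp add: N_def d_def)
  have "projP rs u \<bullet> v = (\<Sum>k<d. \<Sum>l<d. N k l * (rs ! l \<bullet> u) * (rs ! k \<bullet> v))"
    unfolding projP_eq by (simp add: N_def d_def inner_sum_left sum_distrib_right)
  also have "\<dots> = (\<Sum>l<d. \<Sum>k<d. N l k * (rs ! l \<bullet> u) * (rs ! k \<bullet> v))"
    by (subst sum.swap) (intro sum.cong refl, simp add: sym)
  also have "\<dots> = u \<bullet> projP rs v"
    unfolding projP_eq by (simp add: N_def d_def inner_sum_right sum_distrib_left inner_commute mult.commute mult.left_commute)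
  finally show ?thesis .
qed

lemma Hbar_eq: "fst (ed l) \<noteq> snd (ed l) \<Longrightarrow> Hbar ed x l = x (fst (ed l)) - x (snd (ed l))"
  by (simp add: Hbar_def incid_def)

lemma sum_incid:
  assumes "fst (ed l) \<noteq> snd (ed l)" "fst (ed l) < m" "snd (ed l) < m"
  shows "(\<Sum>i<m. incid ed l i * h i) = h (fst (ed l)) - h (snd (ed l))"
proof -
  have "(\<Sum>i<m. incid ed l i * h i) = (\<Sum>i<m. (if i = fst (ed l) then h i else 0) - (if i = snd (ed l) then h i else 0))"
    using assms(1) by (intro sum.cong) (auto simp: incid_def)
  also have "\<dots> = h (fst (ed l)) - h (snd (ed l))"
    using assms by (simp add: sum_subtractf)
  finally show ?thesis .
qed

lemma adjoint:
  assumes "\<forall>l<mbar. fst (ed l) < m \<and> snd (ed l) < m \<and> fst (ed l) \<noteq> snd (ed l)"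
  shows "(\<Sum>i<m. lam i \<bullet> HbarT ed mbar y i) = (\<Sum>l<mbar. Hbar ed lam l \<bullet> y l)"
proof -
  have "(\<Sum>i<m. lam i \<bullet> HbarT ed mbar y i) = (\<Sum>i<m. \<Sum>l<mbar. incid ed l i * (lam i \<bullet> y l))"
    by (simp add: HbarT_def inner_sum_right)
  also have "\<dots> = (\<Sum>l<mbar. \<Sum>i<m. incid ed l i * (lam i \<bullet> y l))"
    by (rule sum.swap)
  also have "\<dots> = (\<Sum>l<mbar. Hbar ed lam l \<bullet> y l)"
  proof (intro sum.cong refl)
    fix l assume "l \<in> {..<mbar}"
    then have l: "fst (ed l) < m" "snd (ed l) < m" "fst (ed l) \<noteq> snd (ed l)" using assms by auto
    show "(\<Sum>i<m. incid ed l i * (lam i \<bullet> y l)) = Hbar ed lam l \<bullet> y l"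
      using sum_incid[of ed l m "\<lambda>i. lam i \<bullet> y l", OF l(3,1,2)] Hbar_eq[where ed=ed and l=l and x=lam, OF l(3)]
      by (simp add: inner_diff_left)
  qed
  finally show ?thesis .
qed

theorem lemma2:
  fixes m mbar :: nat
    and E :: "(nat \<times> nat) set"
    and ed :: "nat \<Rightarrow> nat \<times> nat"
    and A :: "nat \<Rightarrow> nat \<Rightarrow> (real^'n) list"
    and b :: "nat \<Rightarrow> nat \<Rightarrow> real list"
    and f :: "nat \<Rightarrow> real^'n \<Rightarrow> real"
    and g :: "nat \<Rightarrow> real^'n \<Rightarrow> real^'n"
    and xb lamb :: "nat \<Rightarrow> real^'n"
  assumes E_vert: "E \<subseteq> {0..<m} \<times> {0..<m}"
    and E_sym: "\<And>i j. (i, j) \<in> E \<Longrightarrow> (j, i) \<in> E"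
    and E_irrefl: "\<And>i. (i, i) \<notin> E"
    and connected: "\<forall>i<m. \<forall>j<m. (i, j) \<in> E\<^sup>*"
    and ed_E: "\<forall>l<mbar. ed l \<in> E"
    and ed_enum: "\<forall>(i, j)\<in>E. \<exists>!l. l < mbar \<and> (ed l = (i, j) \<or> ed l = (j, i))"
    and A_rank: "\<forall>(i, j)\<in>E. full_row_rank (A i j)"
    and b_len: "\<forall>(i, j)\<in>E. length (b i j) = length (A i j)"
    and A_sym: "\<forall>(i, j)\<in>E. A i j = A j i"
    and b_anti: "\<forall>(i, j)\<in>E. b i j = map uminus (b j i)"
    and f_grad: "\<forall>i<m. \<forall>z. (f i has_derivative (\<lambda>h. g i z \<bullet> h)) (at z)"
    and g_cont: "\<forall>i<m. continuous_on UNIV (g i)"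
    and f_convex: "\<forall>i<m. convex_on UNIV (f i)"
    and solvable: "\<exists>xs. (\<forall>(i, j)\<in>E. mat_app (A i j) (xs i - xs j) = b i j) \<and>
        (\<forall>x. (\<forall>(i, j)\<in>E. mat_app (A i j) (x i - x j) = b i j) \<longrightarrow>
             (\<Sum>i<m. f i (xs i)) \<le> (\<Sum>i<m. f i (x i)))"
    and ker_img: "\<forall>z. (\<forall>i<m. HbarT ed mbar (Pbar A ed z) i = 0) \<longrightarrow> (\<forall>l<mbar. Pbar A ed z l = 0)"
    and equil: "equilibrium m mbar ed A b g xb lamb"
  shows "\<forall>x lam. augLag m mbar ed A b f xb lam \<le> augLag m mbar ed A b f xb lamb
              \<and> augLag m mbar ed A b f xb lamb \<le> augLag m mbar ed A b f x lamb"
proof -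
  have edm: "\<forall>l<mbar. fst (ed l) < m \<and> snd (ed l) < m \<and> fst (ed l) \<noteq> snd (ed l)"
  proof (intro allI impI)
    fix l assume "l < mbar"
    then have "ed l \<in> E" using ed_E by auto
    then show "fst (ed l) < m \<and> snd (ed l) < m \<and> fst (ed l) \<noteq> snd (ed l)"
      using E_vert E_irrefl by (cases "ed l") auto
  qed
  have frr: "full_row_rank (A (fst (ed l)) (snd (ed l)))" if "l < mbar" for l
  proof -
    have "ed l \<in> E" using ed_E that by auto
    then show ?thesis using A_rank by (cases "ed l") auto
  qed
  have eq1: "\<forall>i<m. - g i (xb i) - HbarT ed mbar (Pbar A ed (Hbar ed lamb)) i
              - HbarT ed mbar (resid A b ed xb) i = 0"
   and eq2: "\<forall>i<m. HbarT ed mbar (resid A b ed xb) i = 0"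
    using equil unfolding equilibrium_def by auto
  have r0: "\<forall>l<mbar. resid A b ed xb l = 0"
    using ker_img[rule_format, of "\<lambda>l. Hbar ed xb l - bbar A b ed l"] eq2
    unfolding resid_def by auto
  have gi: "g i (xb i) = - HbarT ed mbar (Pbar A ed (Hbar ed lamb)) i" if "i < m" for i
  proof -
    have "- g i (xb i) = HbarT ed mbar (Pbar A ed (Hbar ed lamb)) i" using eq1 eq2 that by auto
    then show ?thesis by (metis minus_minus)
  qed
  have L: "augLag m mbar ed A b f xb lam = (\<Sum>i<m. f i (xb i)) + 1/2 * (\<Sum>l<mbar. (norm (resid A b ed xb l))\<^sup>2)" for lam
    unfolding augLag_def using eq2 by simp
  have L0: "augLag m mbar ed A b f xb lamb = (\<Sum>i<m. f i (xb i))"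
    unfolding L using r0 by simp
  show ?thesis
  proof (intro allI conjI)
    fix lam show "augLag m mbar ed A b f xb lam \<le> augLag m mbar ed A b f xb lamb"
      unfolding L by simp
  next
    fix x
    define dx where "dx i = x i - xb i" for i
    have conv: "(\<Sum>i<m. f i (x i)) \<ge> (\<Sum>i<m. f i (xb i) + g i (xb i) \<bullet> dx i)"
      unfolding dx_def using f_convex f_grad by (intro sum_mono tangent) auto
    have T1: "(\<Sum>i<m. g i (xb i) \<bullet> dx i) = - (\<Sum>l<mbar. Hbar ed dx l \<bullet> Pbar A ed (Hbar ed lamb) l)"
    proof -
      have "(\<Sum>i<m. g i (xb i) \<bullet> dx i) = - (\<Sum>i<m. dx i \<bullet> HbarT ed mbar (Pbar A ed (Hbar ed lamb)) i)"
        using gi by (simp add: sum_negf[symmetric] inner_commute)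
      then show ?thesis using adjoint[OF edm] by simp
    qed
    have rx: "resid A b ed x l = projP (A (fst (ed l)) (snd (ed l))) (Hbar ed dx l)" if l: "l < mbar" for l
    proof -
      have "resid A b ed x l = resid A b ed x l - resid A b ed xb l" using r0 l by simp
      also have "\<dots> = projP (A (fst (ed l)) (snd (ed l))) ((Hbar ed x l - bbar A b ed l) - (Hbar ed xb l - bbar A b ed l))"
        by (simp add: resid_def Pbar_def projP_diff)
      also have "(Hbar ed x l - bbar A b ed l) - (Hbar ed xb l - bbar A b ed l) = Hbar ed dx l"
      proof -
        have "fst (ed l) \<noteq> snd (ed l)" using edm l by auto
        then show ?thesis by (simp add: Hbar_eq dx_def algebra_simps)
      qed
      finally show ?thesis .
    qed
    have T2: "(\<Sum>i<m. lamb i \<bullet> HbarT ed mbar (resid A b ed x) i) = (\<Sum>l<mbar. Hbar ed dx l \<bullet> Pbar A ed (Hbar ed lamb) l)"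
    proof -
      have "(\<Sum>i<m. lamb i \<bullet> HbarT ed mbar (resid A b ed x) i) = (\<Sum>l<mbar. Hbar ed lamb l \<bullet> resid A b ed x l)"
        by (rule adjoint[OF edm])
      also have "\<dots> = (\<Sum>l<mbar. Hbar ed dx l \<bullet> Pbar A ed (Hbar ed lamb) l)"
      proof (intro sum.cong refl)
        fix l assume "l \<in> {..<mbar}"
        then have l: "l < mbar" by simp
        show "Hbar ed lamb l \<bullet> resid A b ed x l = Hbar ed dx l \<bullet> Pbar A ed (Hbar ed lamb) l"
          unfolding rx[OF l] Pbar_def
          using projP_sym[OF frr[OF l], of "Hbar ed lamb l" "Hbar ed dx l"]
          by (simp add: inner_commute)
      qed
      finally show ?thesis .
    qed
    have nn: "0 \<le> 1/2 * (\<Sum>l<mbar. (norm (resid A b ed x l))\<^sup>2)"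
      by (simp add: sum_nonneg)
    have "augLag m mbar ed A b f x lamb = (\<Sum>i<m. f i (x i)) + (\<Sum>l<mbar. Hbar ed dx l \<bullet> Pbar A ed (Hbar ed lamb) l)
          + 1/2 * (\<Sum>l<mbar. (norm (resid A b ed x l))\<^sup>2)"
      unfolding augLag_def T2 ..
    moreover have "(\<Sum>i<m. f i (xb i) + g i (xb i) \<bullet> dx i) = (\<Sum>i<m. f i (xb i)) - (\<Sum>l<mbar. Hbar ed dx l \<bullet> Pbar A ed (Hbar ed lamb) l)"
      by (simp add: sum.distrib T1)
    ultimately show "augLag m mbar ed A b f xb lamb \<le> augLag m mbar ed A b f x lamb"
      using conv nn L0 by linarith
  qed
qed

end
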